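(* Let $A\in P(n)$ and let $N$ be a unitarily invariant norm on $M_n$. Then $I(N,A)=0$ if and only if $A_{ii}=0$ for some $i\in\{1,\dots,n\}$.
   Context: $M_n$ is the set of complex $n\times n$ matrices, $P(n)$ the positive semidefinite ones, $\circ$ the Hadamard product. For a unitarily invariant norm $N$, $I(N,A)=\min\{N(A\circ B): B\in P(n),\ N(B)=1\}$. *)

theory Defs
  imports "HOL-Analysis.Analysis"
begin

definition cadj :: "complex^'n^'n \<Rightarrow> complex^'n^'n" where
  "cadj A = (\<chi> i j. cnj (A $ j $ i))"

definition unitary_mat :: "complex^'n^'n \<Rightarrow> bool" where
  "unitary_mat U \<longleftrightarrow> cadj U ** U = mat 1 \<and> U ** cadj U = mat 1"

definition psd :: "complex^'n^'n \<Rightarrow> bool" where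
  "psd A \<longleftrightarrow> cadj A = A \<and>
     (\<forall>x::complex^'n. Im (\<Sum>i\<in>UNIV. cnj (x $ i) * (A *v x) $ i) = 0
                     \<and> Re (\<Sum>i\<in>UNIV. cnj (x $ i) * (A *v x) $ i) \<ge> 0)"

definition hadamard :: "complex^'n^'n \<Rightarrow> complex^'n^'n \<Rightarrow> complex^'n^'n" where
  "hadamard A B = (\<chi> i j. A $ i $ j * B $ i $ j)"

definition cscale :: "complex \<Rightarrow> complex^'n^'n \<Rightarrow> complex^'n^'n" where
  "cscale c A = (\<chi> i j. c * A $ i $ j)"

definition matrix_norm :: "(complex^'n^'n \<Rightarrow> real) \<Rightarrow> bool" where
  "matrix_norm N \<longleftrightarrow>
     (\<forall>A. 0 \<le> N A) \<and> (\<forall>A. N A = 0 \<longleftrightarrow> A = 0) \<and>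
     (\<forall>c A. N (cscale c A) = cmod c * N A) \<and>
     (\<forall>A B. N (A + B) \<le> N A + N B)"

definition ui_norm :: "(complex^'n^'n \<Rightarrow> real) \<Rightarrow> bool" where
  "ui_norm N \<longleftrightarrow> matrix_norm N \<and>
     (\<forall>U V A. unitary_mat U \<and> unitary_mat V \<longrightarrow> N (U ** A ** V) = N A)"

text \<open>I(N,A) = min { N(A o B) : B psd, N(B) = 1 }; the minimum is attained, so it equals the infimum.\<close>
definition I_val :: "(complex^'n^'n \<Rightarrow> real) \<Rightarrow> complex^'n^'n \<Rightarrow> real" where
  "I_val N A = Inf {N (hadamard A B) | B. psd B \<and> N B = 1}"

end

theory Submission
  imports Defs
begin
lemma N_scaleR: assumes "matrix_norm N" shows "N (c *\<^sub>R X) = \<bar>c\<bar> * N X"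
proof -
  have "c *\<^sub>R X = cscale (of_real c) X"
    unfolding cscale_def vec_eq_iff by (auto simp: complex_eq_iff)
  then show ?thesis using assms unfolding matrix_norm_def by simp
qed

lemma N_cont: assumes "matrix_norm N" shows "continuous_on UNIV N"
proof (rule convex_on_continuous)
  show "convex_on UNIV N"
  proof (rule convex_onI)
    fix t :: real and x y assume "0 < t" "t < 1"
    have "N ((1 - t) *\<^sub>R x + t *\<^sub>R y) \<le> N ((1 - t) *\<^sub>R x) + N (t *\<^sub>R y)"
      using assms unfolding matrix_norm_def by blast
    also have "\<dots> = (1 - t) * N x + t * N y"
      using N_scaleR[OF assms] \<open>0 < t\<close> \<open>t < 1\<close> by simp
    finally show "N ((1 - t) *\<^sub>R x + t *\<^sub>R y) \<le> (1 - t) * N x + t * N y" .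
  qed simp
qed simp

lemma N_lower: assumes "matrix_norm N" shows "\<exists>m>0. \<forall>X. m * norm X \<le> N X"
proof -
  have cN: "continuous_on UNIV N" by (rule N_cont[OF assms])
  have "sphere (0::complex^'n^'n) 1 \<noteq> {}" by simp
  then obtain X0 where X0: "X0 \<in> sphere 0 1" "\<And>Y. Y \<in> sphere 0 1 \<Longrightarrow> N X0 \<le> N Y"
    using continuous_attains_inf[OF compact_sphere _ continuous_on_subset[OF cN]] by blast
  have "X0 \<noteq> 0" using X0(1) by auto
  then have pos: "N X0 > 0" using assms unfolding matrix_norm_def
    by (metis order_less_le)
  have "N X0 * norm X \<le> N X" for X
  proof (cases "X = 0")
    case True then show ?thesis using assms unfolding matrix_norm_def by simp
  next
    case False
    have "(1 / norm X) *\<^sub>R X \<in> sphere 0 1" using False by simp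
    then have "N X0 \<le> N ((1 / norm X) *\<^sub>R X)" by (rule X0(2))
    also have "\<dots> = N X / norm X" using N_scaleR[OF assms] by simp
    finally show ?thesis using False by (simp add: field_simps)
  qed
  then show ?thesis using pos by blast
qed

lemma psd_closed: "closed {B::complex^'n^'n. psd B}"
  unfolding psd_def cadj_def matrix_vector_mult_def
  by (intro closed_Collect_conj closed_Collect_all closed_Collect_eq closed_Collect_le continuous_intros)

lemma psd_zero_diag:
  fixes B :: "complex^'n^'n"
  assumes "psd B" and d: "\<And>i. B $ i $ i = 0"
  shows "B = 0"
proof -
  have h: "cadj B = B" using assms(1) unfolding psd_def by blast
  have "B $ i $ j = 0" for i j
  proof (cases "i = j")
    case True then show ?thesis using d by simp
  next
    case False
    define t where "t = - cnj (B $ i $ j)"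
    define x :: "complex^'n" where "x = (\<chi> k. if k = i then 1 else if k = j then t else 0)"
    have Bx: "(B *v x) $ k = B $ k $ i + B $ k $ j * t" for k
    proof -
      have "(B *v x) $ k = (\<Sum>l\<in>UNIV. B $ k $ l * x $ l)" by (simp add: matrix_vector_mult_def)
      also have "\<dots> = (\<Sum>l\<in>{i,j}. B $ k $ l * x $ l)"
        by (rule sum.mono_neutral_right) (auto simp: x_def)
      also have "\<dots> = B $ k $ i + B $ k $ j * t" using False by (simp add: x_def)
      finally show ?thesis .
    qed
    have "(\<Sum>k\<in>UNIV. cnj (x $ k) * (B *v x) $ k) = (\<Sum>k\<in>{i,j}. cnj (x $ k) * (B *v x) $ k)"
      by (rule sum.mono_neutral_right) (auto simp: x_def)
    also have "\<dots> = B $ i $ j * t + cnj t * B $ j $ i"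
      using False d by (simp add: Bx) (simp add: x_def)
    also have "B $ j $ i = cnj (B $ i $ j)"
      using h unfolding cadj_def vec_eq_iff by (metis vec_lambda_beta)
    finally have q: "(\<Sum>k\<in>UNIV. cnj (x $ k) * (B *v x) $ k) = - 2 * (B $ i $ j * cnj (B $ i $ j))"
      unfolding t_def by (simp add: algebra_simps)
    have "Re (\<Sum>k\<in>UNIV. cnj (x $ k) * (B *v x) $ k) \<ge> 0"
      using assms(1) unfolding psd_def by blast
    then show ?thesis unfolding q by (simp add: complex_mult_cnj complex_eq_iff) (smt (verit) zero_le_power2 power2_less_eq_zero_iff)
  qed
  then show ?thesis by (simp add: vec_eq_iff)
qed
definition Emat :: "'n \<Rightarrow> real \<Rightarrow> complex^'n^'n" where
  "Emat i c = (\<chi> k l. if k = i \<and> l = i then complex_of_real c else 0)"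

lemma Emat_psd: assumes "c \<ge> 0" shows "psd (Emat i c)"
proof -
  have Ex: "(Emat i c *v x) $ k = (if k = i then of_real c * x $ i else 0)" for x k
  proof -
    have "(Emat i c *v x) $ k = (\<Sum>l\<in>UNIV. (Emat i c) $ k $ l * x $ l)" by (simp add: matrix_vector_mult_def)
    also have "\<dots> = (\<Sum>l\<in>{i}. (Emat i c) $ k $ l * x $ l)"
      by (rule sum.mono_neutral_right) (auto simp: Emat_def)
    finally show ?thesis by (simp add: Emat_def)
  qed
  have "(\<Sum>k\<in>UNIV. cnj (x $ k) * (Emat i c *v x) $ k) = (\<Sum>k\<in>{i}. cnj (x $ k) * (Emat i c *v x) $ k)" for x
    by (rule sum.mono_neutral_right) (auto simp: Ex)
  then have q: "(\<Sum>k\<in>UNIV. cnj (x $ k) * (Emat i c *v x) $ k) = of_real c * (x $ i * cnj (x $ i))" for x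
    by (simp add: Ex algebra_simps)
  have "cadj (Emat i c) = Emat i c" by (auto simp: cadj_def Emat_def vec_eq_iff)
  then show ?thesis unfolding psd_def q using assms by (simp add: complex_mult_cnj)
qed

lemma Emat_scale: "Emat i c = cscale (of_real c) (Emat i 1)"
  by (auto simp: Emat_def cscale_def vec_eq_iff)

theorem mainTheorem16:
  fixes A :: "complex^'n^'n" and N :: "complex^'n^'n \<Rightarrow> real"
  assumes "psd A" and "ui_norm N"
  shows "I_val N A = 0 \<longleftrightarrow> (\<exists>i. A $ i $ i = 0)"
proof -
  have mn: "matrix_norm N" using assms(2) unfolding ui_norm_def by blast
  have N0: "N X \<ge> 0" for X using mn unfolding matrix_norm_def by blast
  have Nz: "N X = 0 \<longleftrightarrow> X = 0" for X using mn unfolding matrix_norm_def by blast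
  define S where "S = {N (hadamard A B) | B. psd B \<and> N B = 1}"
  have IS: "I_val N A = Inf S" unfolding S_def I_val_def ..
  define B1 where "B1 i = Emat i (1 / N (Emat i 1))" for i
  have NE: "N (Emat i 1) > 0" for i
  proof -
    have "Emat i 1 \<noteq> 0" by (auto simp: Emat_def vec_eq_iff)
    then show ?thesis using N0 Nz by (metis order_less_le)
  qed
  have B1: "psd (B1 i) \<and> N (B1 i) = 1" for i
  proof
    show "psd (B1 i)" unfolding B1_def using NE[of i] by (intro Emat_psd) simp
    have "N (B1 i) = cmod (of_real (1 / N (Emat i 1))) * N (Emat i 1)"
      unfolding B1_def Emat_scale[of i "1 / N (Emat i 1)"] using mn unfolding matrix_norm_def by blast
    then show "N (B1 i) = 1" using NE[of i] by (simp add: norm_divide)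
  qed
  show ?thesis
  proof
    assume I0: "I_val N A = 0"
    show "\<exists>i. A $ i $ i = 0"
    proof (rule ccontr)
      assume nz: "\<not> (\<exists>i. A $ i $ i = 0)"
      define K where "K = {B. psd B} \<inter> {B. N B = 1}"
      obtain m where m: "m > 0" "\<And>X. m * norm X \<le> N X" using N_lower[OF mn] by blast
      have cN: "continuous_on UNIV N" by (rule N_cont[OF mn])
      have c1: "closed {B. N B = 1}" by (rule closed_Collect_eq[OF cN continuous_on_const])
      have "closed K" unfolding K_def by (rule closed_Int[OF psd_closed c1])
      moreover have "bounded K" unfolding bounded_iff
      proof (intro exI ballI)
        fix B assume "B \<in> K"
        then have "m * norm B \<le> 1" using m(2)[of B] by (simp add: K_def)
        then show "norm B \<le> 1 / m" using m(1) by (simp add: field_simps)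
      qed
      ultimately have cK: "compact K" by (simp add: compact_eq_bounded_closed)
      have Kne: "K \<noteq> {}" using B1 unfolding K_def by blast
      have ch: "continuous_on K (\<lambda>B. hadamard A B)"
        unfolding hadamard_def by (intro continuous_intros)
      have cf: "continuous_on K (\<lambda>B. N (hadamard A B))"
        using continuous_on_compose2[OF cN ch] by simp
      obtain B0 where B0: "B0 \<in> K" "\<And>B. B \<in> K \<Longrightarrow> N (hadamard A B0) \<le> N (hadamard A B)"
        using continuous_attains_inf[OF cK Kne cf] by blast
      have SK: "S = (\<lambda>B. N (hadamard A B)) ` K" unfolding S_def K_def by auto
      have "Inf S = N (hadamard A B0)"
        unfolding SK by (rule cInf_eq_minimum) (use B0 in auto)
      then have "hadamard A B0 = 0" using I0 IS Nz by simp
      then have "A $ i $ i * B0 $ i $ i = 0" for i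
      proof -
        assume h0: "hadamard A B0 = 0"
        have "(hadamard A B0) $ i $ i = 0" by (simp add: h0)
        then show ?thesis by (simp add: hadamard_def)
      qed
      then have dz: "B0 $ i $ i = 0" for i using nz by auto
      have pB0: "psd B0" and nB0: "N B0 = 1" using B0(1) by (simp_all add: K_def)
      from pB0 dz have "B0 = 0" by (rule psd_zero_diag)
      then show False using nB0 Nz[of B0] by simp
    qed
  next
    assume "\<exists>i. A $ i $ i = 0"
    then obtain i where i: "A $ i $ i = 0" by blast
    have "hadamard A (B1 i) = 0"
      using i by (auto simp: hadamard_def B1_def Emat_def vec_eq_iff)
    then have "N (hadamard A (B1 i)) = 0" using Nz by simp
    then have "0 = N (hadamard A (B1 i)) \<and> psd (B1 i) \<and> N (B1 i) = 1" using B1[of i] by simp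
    then have "0 \<in> S" unfolding S_def by blast
    moreover have "\<And>x. x \<in> S \<Longrightarrow> 0 \<le> x" unfolding S_def using N0 by blast
    ultimately show "I_val N A = 0" unfolding IS by (rule cInf_eq_minimum)
  qed
qed
end
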